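(* Let $X,Y$ be random variables with $0\le Y\le 1$ and $X=E(Y\mid X)$. Then for every $\delta\in[0,\tfrac12)$, $$P(|Y-X|\ge1-\delta)\le\delta,$$ with equality if $X=\delta$ (constant) and $Y$ has the Bernoulli$(\delta)$ distribution. *)

theory Defs
  imports "HOL-Probability.Probability"
begin

definition sigma_gen :: "'a measure \<Rightarrow> ('a \<Rightarrow> real) \<Rightarrow> 'a measure" where
  "sigma_gen M X = vimage_algebra (space M) X borel"

end

theory Submission
  imports Defs
begin

lemma part1:
  fixes M :: "'a measure" and \<delta> :: real and X Y :: "'a \<Rightarrow> real"
  assumes "prob_space M"
    and "0 \<le> \<delta>" and "\<delta> < 1/2"
    and Xm[measurable]: "X \<in> borel_measurable M" and Ym[measurable]: "Y \<in> borel_measurable M"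
    and Yb: "AE x in M. 0 \<le> Y x \<and> Y x \<le> 1"
    and XE: "AE x in M. X x = real_cond_exp M (sigma_gen M X) Y x"
  shows "measure M {x \<in> space M. \<bar>Y x - X x\<bar> \<ge> 1 - \<delta>} \<le> \<delta>"
proof -
  interpret prob_space M by fact
  define F where "F = sigma_gen M X"
  have sub: "subalgebra M F"
    unfolding subalgebra_def F_def sigma_gen_def
    by (auto simp: sets_vimage_algebra2)
  interpret finite_measure_subalgebra M F
    by unfold_locales (rule sub)
  have intY: "integrable M Y"
    by (rule integrable_const_bound[where B=1]) (use Yb in auto)
  have intC: "integrable M (real_cond_exp M F Y)"
    using intY by blast
  have intX: "integrable M X"
    using integrable_cong_AE[of X M "real_cond_exp M F Y"] XE intC
    unfolding F_def by (auto simp: eq_commute)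
  have key: "(\<integral>x. indicator A x * Y x \<partial>M) = (\<integral>x. indicator A x * X x \<partial>M)"
    if "A \<in> sets F" for A
  proof -
    have [measurable]: "A \<in> sets M" using that sub unfolding subalgebra_def by auto
    have "(\<integral>x. indicator A x * Y x \<partial>M) = (\<integral>x. indicator A x * real_cond_exp M F Y x \<partial>M)"
      using real_cond_exp_intA[OF intY that] unfolding set_lebesgue_integral_def by simp
    also have "\<dots> = (\<integral>x. indicator A x * X x \<partial>M)"
      by (rule integral_cong_AE) (use XE in \<open>auto simp: F_def\<close>)
    finally show ?thesis .
  qed
  define A where "A = {x \<in> space M. X x \<le> \<delta>}"
  define B where "B = {x \<in> space M. 1 - \<delta> \<le> X x}"
  define S where "S = {x \<in> space M. \<bar>Y x - X x\<bar> \<ge> 1 - \<delta>}"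
  have AF: "A \<in> sets F"
    unfolding F_def sigma_gen_def sets_vimage_algebra2[of X "space M" borel, simplified] A_def
    by (rule CollectI, rule exI[of _ "{..\<delta>}"]) auto
  have BF: "B \<in> sets F"
    unfolding F_def sigma_gen_def sets_vimage_algebra2[of X "space M" borel, simplified] B_def
    by (rule CollectI, rule exI[of _ "{1-\<delta>..}"]) auto
  have [measurable]: "A \<in> sets M" "B \<in> sets M" "S \<in> sets M"
    unfolding A_def B_def S_def by measurable
  have bound: "AE x in M. indicator S x \<le> \<delta> + (indicator A x * Y x - indicator A x * X x)
      - (indicator B x * Y x - indicator B x * X x)"
    using Yb
  proof eventually_elim
    case (elim x)
    show ?case
      using elim assms(2,3)
      by (auto simp: indicator_def A_def B_def S_def abs_if split: if_splits)
  qed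
  have iA: "integrable M (\<lambda>x. indicator A x * Y x)" "integrable M (\<lambda>x. indicator A x * X x)"
    "integrable M (\<lambda>x. indicator B x * Y x)" "integrable M (\<lambda>x. indicator B x * X x)"
    using integrable_mult_indicator[of A M X] integrable_mult_indicator[of A M Y]
      integrable_mult_indicator[of B M X] integrable_mult_indicator[of B M Y] intX intY by simp_all
  have "measure M S = (\<integral>x. indicator S x \<partial>M)"
    by simp
  also have "\<dots> \<le> (\<integral>x. \<delta> + (indicator A x * Y x - indicator A x * X x)
      - (indicator B x * Y x - indicator B x * X x) \<partial>M)"
    by (rule integral_mono_AE) (use bound iA in \<open>auto simp: integrable_indicator_iff less_top[symmetric]\<close>)
  also have "\<dots> = \<delta>"
    using iA key[OF AF] key[OF BF] by (simp add: prob_space)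
  finally show ?thesis unfolding S_def .
qed

lemma part2:
  fixes M :: "'a measure" and \<delta> :: real and X Y :: "'a \<Rightarrow> real"
  assumes "prob_space M"
    and d0: "0 \<le> \<delta>" and d1: "\<delta> < 1/2"
    and Ym[measurable]: "Y \<in> borel_measurable M"
    and Xc: "\<forall>x \<in> space M. X x = \<delta>"
    and D: "distr M borel Y = distr (measure_pmf (bernoulli_pmf \<delta>)) borel (\<lambda>b. if b then 1 else 0)"
  shows "measure M {x \<in> space M. \<bar>Y x - X x\<bar> \<ge> 1 - \<delta>} = \<delta>"
proof -
  define T where "T = {y::real. \<bar>y - \<delta>\<bar> \<ge> 1 - \<delta>}"
  have Tb: "T \<in> sets borel" unfolding T_def by measurable
  have "{x \<in> space M. \<bar>Y x - X x\<bar> \<ge> 1 - \<delta>} = Y -` T \<inter> space M"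
    using Xc by (auto simp: T_def)
  hence "measure M {x \<in> space M. \<bar>Y x - X x\<bar> \<ge> 1 - \<delta>} = measure (distr M borel Y) T"
    by (simp add: measure_distr Tb)
  also have "\<dots> = measure (distr (measure_pmf (bernoulli_pmf \<delta>)) borel (\<lambda>b. if b then 1 else (0::real))) T"
    by (simp add: D)
  also have "\<dots> = measure (measure_pmf (bernoulli_pmf \<delta>)) ((\<lambda>b. if b then 1 else (0::real)) -` T \<inter> UNIV)"
    by (subst measure_distr) (auto simp: Tb)
  also have "(\<lambda>b. if b then 1 else (0::real)) -` T \<inter> UNIV = {True}"
    using d0 d1 by (auto simp: T_def split: if_splits)
  also have "measure (measure_pmf (bernoulli_pmf \<delta>)) {True} = \<delta>"
    using d0 d1 by (simp add: measure_pmf_single)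
  finally show ?thesis .
qed

theorem lemma3p1:
  fixes M :: "'a measure" and \<delta> :: real
  assumes "prob_space M"
    and "0 \<le> \<delta>" and "\<delta> < 1/2"
  shows "(\<forall>X Y. X \<in> borel_measurable M \<longrightarrow> Y \<in> borel_measurable M
            \<longrightarrow> (AE x in M. 0 \<le> Y x \<and> Y x \<le> 1)
            \<longrightarrow> (AE x in M. X x = real_cond_exp M (sigma_gen M X) Y x)
            \<longrightarrow> measure M {x \<in> space M. \<bar>Y x - X x\<bar> \<ge> 1 - \<delta>} \<le> \<delta>)
       \<and> (\<forall>X Y. Y \<in> borel_measurable M
            \<longrightarrow> (\<forall>x \<in> space M. X x = \<delta>)
            \<longrightarrow> distr M borel Y = distr (measure_pmf (bernoulli_pmf \<delta>)) borel (\<lambda>b. if b then 1 else 0)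
            \<longrightarrow> measure M {x \<in> space M. \<bar>Y x - X x\<bar> \<ge> 1 - \<delta>} = \<delta>)"
  using part1[OF assms] part2[OF assms] by blast

end
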